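(* Let $p$ be a ProbNetKAT program, $S=\mathcal{S}[\![p]\!]$ and $U$ as in the context. For all $a,b,b'\subseteq\mathsf{Pk}$, \[ \lim_{n\to\infty}\sum_{a'\subseteq\mathsf{Pk}} (S^n)_{(a,b),(a',b')} = (SU)^\infty_{(a,b),(\emptyset,b')}, \] where $(SU)^\infty:=\lim_{n\to\infty}(SU)^n$. In particular the limit on the left exists, and it can be computed exactly in closed form: writing $SU=\begin{bmatrix} I & 0\\ R & Q\end{bmatrix}$ with the absorbing states $(\emptyset,c)$ listed first, $(SU)^\infty=\begin{bmatrix} I & 0\\ (I-Q)^{-1}R & 0\end{bmatrix}$, a matrix with rational entries.
   Context: $\mathsf{Pk}$ is a finite set of packets; $[\varphi]$ is the Iverson bracket. For a ProbNetKAT program $p$ (with rational choice probabilities), $\mathcal{B}[\![p]\!]\in[0,1]^{2^{\mathsf{Pk}}\times 2^{\mathsf{Pk}}}$ is its stochastic matrix semantics ($\mathcal{B}[\![p]\!]_{ab}$ = probability of output set $b$ on input set $a$). The small-step matrix on states $(a,b)\in 2^{\mathsf{Pk}}\times 2^{\mathsf{Pk}}$ is $S_{(a,b),(a',b')}=[b'=b\cup a]\,\mathcal{B}[\![p]\!]_{a,a'}$. A state $(a,b)$ is saturated if whenever $(S^n)_{(a,b),(a',b')}>0$ for some $n\ge0$ we have $b'=b$. $U_{(a,b),(a',b')}=[b'=b][a'=\emptyset]$ if $(a,b)$ is saturated, and $[b'=b][a'=a]$ otherwise. In the block decomposition, $R$ gives transition probabilities from the non-absorbing (transient) states to the absorbing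 states and $Q$ those between transient states. *)

theory Defs
  imports Complex_Main
begin

text \<open>Packets are records assigning a value to each field; both fields and values
range over finite types, so the set of packets Pk (= UNIV) is finite.\<close>

type_synonym ('f, 'v) packet = "'f \<Rightarrow> 'v"

datatype ('f, 'v) pred =
    PDrop
  | PSkip
  | PTest 'f 'v
  | PDisj "('f, 'v) pred" "('f, 'v) pred"
  | PConj "('f, 'v) pred" "('f, 'v) pred"
  | PNeg "('f, 'v) pred"

primrec eval_pred :: "('f, 'v) pred \<Rightarrow> ('f, 'v) packet \<Rightarrow> bool" where
  "eval_pred PDrop \<pi> = False"
| "eval_pred PSkip \<pi> = True"
| "eval_pred (PTest f n) \<pi> = (\<pi> f = n)"
| "eval_pred (PDisj t u) \<pi> = (eval_pred t \<pi> \<or> eval_pred u \<pi>)"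
| "eval_pred (PConj t u) \<pi> = (eval_pred t \<pi> \<and> eval_pred u \<pi>)"
| "eval_pred (PNeg t) \<pi> = (\<not> eval_pred t \<pi>)"

datatype ('f, 'v) prog =
    Pred "('f, 'v) pred"
  | Assign 'f 'v
  | Par "('f, 'v) prog" "('f, 'v) prog"
  | Seq "('f, 'v) prog" "('f, 'v) prog"
  | Choice "('f, 'v) prog" rat "('f, 'v) prog"
  | Star "('f, 'v) prog"

primrec wf_prog :: "('f, 'v) prog \<Rightarrow> bool" where
  "wf_prog (Pred t) = True"
| "wf_prog (Assign f n) = True"
| "wf_prog (Par p q) = (wf_prog p \<and> wf_prog q)"
| "wf_prog (Seq p q) = (wf_prog p \<and> wf_prog q)"
| "wf_prog (Choice p r q) = (0 \<le> r \<and> r \<le> 1 \<and> wf_prog p \<and> wf_prog q)"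
| "wf_prog (Star p) = wf_prog p"

type_synonym 'a mat = "'a \<Rightarrow> 'a \<Rightarrow> real"

definition mat_id :: "'a mat" where
  "mat_id x y = (if x = y then 1 else 0)"

definition mat_mult :: "'a::finite mat \<Rightarrow> 'a mat \<Rightarrow> 'a mat" where
  "mat_mult M N x z = (\<Sum>y\<in>UNIV. M x y * N y z)"

primrec mat_pow :: "'a::finite mat \<Rightarrow> nat \<Rightarrow> 'a mat" where
  "mat_pow M 0 = mat_id"
| "mat_pow M (Suc n) = mat_mult (mat_pow M n) M"

definition par_mat :: "('a::finite) set mat \<Rightarrow> 'a set mat \<Rightarrow> 'a set mat" where
  "par_mat P Q a b = (\<Sum>c\<in>UNIV. \<Sum>d\<in>UNIV. if c \<union> d = b then P a c * Q a d else 0)"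

text \<open>B[[skip]] and the iterates p^(0) = skip, p^(n+1) = skip & p ; p^(n).\<close>

primrec star_approx :: "('a::finite) set mat \<Rightarrow> nat \<Rightarrow> 'a set mat" where
  "star_approx P 0 = mat_id"
| "star_approx P (Suc n) = par_mat mat_id (mat_mult P (star_approx P n))"

primrec bsem :: "('f::finite, 'v::finite) prog \<Rightarrow> ('f, 'v) packet set mat" where
  "bsem (Pred t) a b = (if b = {\<pi> \<in> a. eval_pred t \<pi>} then 1 else 0)"
| "bsem (Assign f n) a b = (if b = (\<lambda>\<pi>. \<pi>(f := n)) ` a then 1 else 0)"
| "bsem (Par p q) a b = par_mat (bsem p) (bsem q) a b"
| "bsem (Seq p q) a b = mat_mult (bsem p) (bsem q) a b"
| "bsem (Choice p r q) a b = real_of_rat r * bsem p a b + (1 - real_of_rat r) * bsem q a b"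
| "bsem (Star p) a b = lim (\<lambda>n. star_approx (bsem p) n a b)"

definition small_step :: "('a::finite) set mat \<Rightarrow> ('a set \<times> 'a set) mat" where
  "small_step B s t = (if snd t = snd s \<union> fst s then B (fst s) (fst t) else 0)"

definition saturated :: "('a::finite set \<times> 'a set) mat \<Rightarrow> 'a set \<times> 'a set \<Rightarrow> bool" where
  "saturated S s \<longleftrightarrow> (\<forall>n t. mat_pow S n s t > 0 \<longrightarrow> snd t = snd s)"

definition U_mat :: "('a::finite set \<times> 'a set) mat \<Rightarrow> ('a set \<times> 'a set) mat" where
  "U_mat S s t =
     (if saturated S s then (if snd t = snd s \<and> fst t = {} then 1 else 0)
      else (if snd t = snd s \<and> fst t = fst s then 1 else 0))"

definition absorbing_st :: "'a set \<times> 'a set \<Rightarrow> bool" where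
  "absorbing_st s \<longleftrightarrow> fst s = {}"

end

theory Submission
  imports Defs "HOL-Analysis.Determinants"
begin


lemma sum_UNIV_pair: "(\<Sum>y\<in>(UNIV::('a::finite \<times> 'b::finite) set). f y) = (\<Sum>a\<in>UNIV. \<Sum>b\<in>UNIV. f (a,b))"
  by (simp add: sum.cartesian_product flip: UNIV_Times_UNIV)

lemma mat_mult_assoc: "mat_mult (mat_mult A B) C = mat_mult A (mat_mult (B::'a::finite mat) C)"
  by (auto simp: mat_mult_def fun_eq_iff sum_distrib_left sum_distrib_right mult.assoc intro: sum.swap)

lemma mat_mult_id_left[simp]: "mat_mult mat_id A = (A::'a::finite mat)"
  by (auto simp: mat_mult_def mat_id_def fun_eq_iff if_distrib[where f="\<lambda>c. c * _"] cong: if_cong)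

lemma mat_mult_id_right[simp]: "mat_mult A mat_id = (A::'a::finite mat)"
  by (auto simp: mat_mult_def mat_id_def fun_eq_iff if_distrib[where f="\<lambda>c. _ * c"] cong: if_cong)

lemma mat_pow_Suc': "mat_pow M (Suc n) = mat_mult M (mat_pow (M::'a::finite mat) n)"
  by (induction n) (simp_all add: mat_mult_assoc)

lemma mat_pow_add: "mat_pow M (m + n) = mat_mult (mat_pow M m) (mat_pow (M::'a::finite mat) n)"
  by (induction n) (simp_all add: mat_mult_assoc)

definition stoch :: "'a::finite mat \<Rightarrow> bool" where
  "stoch M \<longleftrightarrow> (\<forall>s t. 0 \<le> M s t) \<and> (\<forall>s. (\<Sum>t\<in>UNIV. M s t) = 1)"

lemma stoch_mult: "stoch A \<Longrightarrow> stoch B \<Longrightarrow> stoch (mat_mult A B)"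
  unfolding stoch_def mat_mult_def
  by (auto simp: sum.swap[of _ UNIV UNIV] sum_distrib_left[symmetric] intro!: sum_nonneg)

lemma stoch_id: "stoch mat_id"
  by (auto simp: stoch_def mat_id_def)

lemma stoch_pow: "stoch M \<Longrightarrow> stoch (mat_pow M n)"
  by (induction n) (auto intro: stoch_mult stoch_id)

lemma stoch_nonneg: "stoch M \<Longrightarrow> 0 \<le> M s t"
  by (simp add: stoch_def)

lemma stoch_sum: "stoch M \<Longrightarrow> (\<Sum>t\<in>UNIV. M s t) = 1"
  by (simp add: stoch_def)

lemma stoch_le1: "stoch M \<Longrightarrow> M s t \<le> 1"
proof -
  assume "stoch M"
  then have "M s t \<le> (\<Sum>t\<in>UNIV. M s t)"
    by (intro member_le_sum) (auto simp: stoch_def)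
  then show ?thesis using \<open>stoch M\<close> by (simp add: stoch_def)
qed

lemma mat_mult_ge: "(\<And>s t. 0 \<le> A s t) \<Longrightarrow> (\<And>s t. 0 \<le> B s t) \<Longrightarrow> A x y * B y z \<le> mat_mult A B x z"
  unfolding mat_mult_def by (rule member_le_sum) auto

lemma sum_pos_ex: "0 < (\<Sum>y\<in>A. f y) \<Longrightarrow> \<exists>y\<in>A. 0 < (f y::real)"
  by (metis not_less sum_nonpos)

lemma det_Rats: "(\<And>i j. (A::real^'n^'n)$i$j \<in> \<rat>) \<Longrightarrow> det A \<in> \<rat>"
  unfolding det_def by (intro Rats_sum Rats_mult Rats_prod) auto



locale pnk =
  fixes P :: "'a::finite set mat"
  assumes P_nonneg: "\<And>a b. 0 \<le> P a b"
    and P_sum: "\<And>a. (\<Sum>b\<in>UNIV. P a b) = 1"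
    and P_empty: "P {} {} = 1"
begin

definition "Sm = small_step P"

lemma P_empty_row: "P {} a = (if a = {} then 1 else 0)"
proof -
  have "(\<Sum>b\<in>UNIV. P {} b) = P {} {} + (\<Sum>b\<in>UNIV - {{}}. P {} b)"
    by (simp add: sum.remove)
  then have "(\<Sum>b\<in>UNIV - {{}}. P {} b) = 0" using P_sum P_empty by simp
  then have "\<forall>b\<in>UNIV - {{}}. P {} b = 0"
    by (subst (asm) sum_nonneg_eq_0_iff) (auto simp: P_nonneg)
  then show ?thesis using P_empty by auto
qed

lemma Sm_stoch: "stoch Sm"
proof -
  have "(\<Sum>t\<in>UNIV. Sm s t) = 1" for s
  proof -
    have "(\<Sum>t\<in>UNIV. Sm s t) = (\<Sum>a\<in>UNIV. \<Sum>b\<in>UNIV. if b = snd s \<union> fst s then P (fst s) a else 0)"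
      by (simp add: sum_UNIV_pair Sm_def small_step_def)
    also have "\<dots> = 1" using P_sum by simp
    finally show ?thesis .
  qed
  then show ?thesis by (auto simp: stoch_def Sm_def small_step_def P_nonneg)
qed

lemma Sm_pow_stoch: "stoch (mat_pow Sm n)"
  by (rule stoch_pow[OF Sm_stoch])

lemma Sm_pow_nonneg: "0 \<le> mat_pow Sm n s t"
  by (rule stoch_nonneg[OF Sm_pow_stoch])

lemma Sm_empty: "Sm ({}, c) t = (if t = ({}, c) then 1 else 0)"
  by (cases t) (auto simp: Sm_def small_step_def P_empty_row)

lemma Sm_pow_empty: "mat_pow Sm n ({}, c) t = (if t = ({}, c) then 1 else 0)"
proof (induction n arbitrary: t)
  case 0
  then show ?case by (auto simp: mat_id_def)
next
  case (Suc n)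
  have "mat_pow Sm (Suc n) ({}, c) t = (\<Sum>y\<in>UNIV. (if y = ({}, c) then 1 else 0) * Sm y t)"
    by (simp add: mat_mult_def Suc)
  also have "\<dots> = Sm ({}, c) t"
    by (simp add: if_distrib[where f="\<lambda>x. x * _"] cong: if_cong)
  finally show ?case by (simp add: Sm_empty)
qed

lemma pow_pos_trans:
  assumes "mat_pow Sm m s t > 0" "mat_pow Sm n t u > 0"
  shows "mat_pow Sm (m + n) s u > 0"
proof -
  have "mat_pow Sm m s t * mat_pow Sm n t u \<le> mat_pow Sm (m + n) s u"
    unfolding mat_pow_add by (rule mat_mult_ge) (auto simp: Sm_pow_nonneg)
  moreover have "mat_pow Sm m s t * mat_pow Sm n t u > 0" using assms by simp
  ultimately show ?thesis by linarith
qed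

lemma reach_mono: "mat_pow Sm n s t > 0 \<Longrightarrow> snd s \<subseteq> snd t"
proof (induction n arbitrary: t)
  case 0
  then show ?case by (auto simp: mat_id_def split: if_splits)
next
  case (Suc n)
  then obtain y where "0 < mat_pow Sm n s y * Sm y t"
    using sum_pos_ex[of "\<lambda>y. mat_pow Sm n s y * Sm y t" UNIV] by (auto simp: mat_mult_def)
  then have "0 < mat_pow Sm n s y" "Sm y t \<noteq> 0"
    using Sm_pow_nonneg[of n s y] by (auto simp: zero_less_mult_iff)
  moreover have "snd s \<subseteq> snd y" using Suc.IH[of y] \<open>0 < mat_pow Sm n s y\<close> by blast
  ultimately show ?case by (auto simp: Sm_def small_step_def split: if_splits)
qed

lemma sat_empty: "saturated Sm ({}, c)"
  by (auto simp: saturated_def Sm_pow_empty split: if_splits)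

lemma sat_closed:
  assumes "saturated Sm s" "mat_pow Sm n s t > 0"
  shows "saturated Sm t"
  unfolding saturated_def
proof (intro allI impI)
  fix m u assume "mat_pow Sm m t u > 0"
  then have "mat_pow Sm (n + m) s u > 0" using pow_pos_trans assms(2) by blast
  then have "snd u = snd s" using assms(1) unfolding saturated_def by blast
  moreover have "snd t = snd s" using assms unfolding saturated_def by blast
  ultimately show "snd u = snd t" by simp
qed

lemma exists_pos: "\<exists>y. Sm s y > 0"
proof -
  have "0 < (\<Sum>t\<in>UNIV. Sm s t)" using stoch_sum[OF Sm_stoch] by simp
  then show ?thesis using sum_pos_ex by blast
qed

lemma exists_sat: "\<exists>n t. mat_pow Sm (Suc n) s t > 0 \<and> saturated Sm t"
proof -
  define R where "R = {t. \<exists>n. mat_pow Sm n s t > 0}"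
  have "s \<in> R" unfolding R_def by (intro CollectI exI[of _ 0]) (simp add: mat_id_def)
  define m where "m = Max ((\<lambda>t. card (snd t)) ` R)"
  have "m \<in> (\<lambda>t. card (snd t)) ` R" unfolding m_def using \<open>s \<in> R\<close> by (intro Max_in) auto
  then obtain t where "t \<in> R" and tm: "card (snd t) = m" by auto
  have maxt: "card (snd u) \<le> card (snd t)" if "u \<in> R" for u
    unfolding tm m_def using that by (intro Max_ge) auto
  obtain n where n: "mat_pow Sm n s t > 0" using \<open>t \<in> R\<close> by (auto simp: R_def)
  have satt: "saturated Sm t"
    unfolding saturated_def
  proof (intro allI impI)
    fix k u assume "mat_pow Sm k t u > 0"
    then have "u \<in> R" unfolding R_def using pow_pos_trans[OF n] by blast
    then have "card (snd u) \<le> card (snd t)" by (rule maxt)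
    moreover have "snd t \<subseteq> snd u" using reach_mono \<open>mat_pow Sm k t u > 0\<close> by blast
    ultimately show "snd u = snd t" by (intro card_seteq[symmetric]) auto
  qed
  show ?thesis
  proof (cases n)
    case (Suc n')
    then show ?thesis using n satt by blast
  next
    case 0
    then have "t = s" using n by (auto simp: mat_id_def split: if_splits)
    obtain y where y: "Sm s y > 0" using exists_pos by blast
    then have "mat_pow Sm 1 s y > 0" by simp
    moreover have "saturated Sm y" using sat_closed[OF satt, of 1 y] \<open>t = s\<close> y by simp
    ultimately show ?thesis by (metis One_nat_def)
  qed
qed

end


context pnk begin

definition "SUm = mat_mult Sm (U_mat Sm)"
definition "sig s = (if saturated Sm s then ({}, snd s) else s)"

lemma U_sig: "U_mat Sm y t = (if t = sig y then 1 else 0)"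
  by (cases y; cases t) (auto simp: U_mat_def sig_def)

lemma U_stoch: "stoch (U_mat Sm)"
  by (auto simp: stoch_def U_sig)

lemma SUm_stoch: "stoch SUm"
  unfolding SUm_def by (rule stoch_mult[OF Sm_stoch U_stoch])

lemma SUm_nonneg: "0 \<le> mat_pow SUm n s t"
  by (rule stoch_nonneg[OF stoch_pow[OF SUm_stoch]])

lemma SUm_pow_le1: "mat_pow SUm n s t \<le> 1"
  by (rule stoch_le1[OF stoch_pow[OF SUm_stoch]])

lemma SUm_ge: "Sm s y \<le> SUm s (sig y)"
proof -
  have "Sm s y * U_mat Sm y (sig y) \<le> SUm s (sig y)"
    unfolding SUm_def by (rule mat_mult_ge) (auto intro: stoch_nonneg Sm_stoch U_stoch)
  then show ?thesis by (simp add: U_sig)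
qed

lemma SUm_empty: "SUm ({}, c) t = (if t = ({}, c) then 1 else 0)"
proof -
  have "SUm ({}, c) t = (\<Sum>y\<in>UNIV. (if y = ({}, c) then 1 else 0) * U_mat Sm y t)"
    by (simp add: SUm_def mat_mult_def Sm_empty)
  also have "\<dots> = U_mat Sm ({}, c) t"
    by (simp add: if_distrib[where f="\<lambda>x. x * _"] cong: if_cong)
  finally show ?thesis using sat_empty by (simp add: U_sig sig_def)
qed

lemma SUm_pow_empty: "mat_pow SUm n ({}, c) t = (if t = ({}, c) then 1 else 0)"
proof (induction n arbitrary: t)
  case 0
  then show ?case by (auto simp: mat_id_def)
next
  case (Suc n)
  have "mat_pow SUm (Suc n) ({}, c) t = (\<Sum>y\<in>UNIV. (if y = ({}, c) then 1 else 0) * SUm y t)"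
    by (simp add: mat_mult_def Suc)
  also have "\<dots> = SUm ({}, c) t"
    by (simp add: if_distrib[where f="\<lambda>x. x * _"] cong: if_cong)
  finally show ?case by (simp add: SUm_empty)
qed

lemma SUm_pow_absorb: "fst s = {} \<Longrightarrow> mat_pow SUm n s t = (if t = s then 1 else 0)"
  by (cases s) (simp add: SUm_pow_empty)

lemma absorb_pos:
  "mat_pow Sm (Suc n) s t > 0 \<Longrightarrow> saturated Sm t \<Longrightarrow> \<exists>k u. fst u = {} \<and> mat_pow SUm k s u > 0"
proof (induction n arbitrary: s)
  case 0
  define y where "y = t"
  have "y = t" "Sm s y > 0" using 0 by (simp_all add: y_def)
  then have "SUm s (sig y) > 0" using SUm_ge[of s y] by linarith
  moreover have "sig y = ({}, snd y)" using \<open>y = t\<close> 0 by (simp add: sig_def)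
  ultimately have "mat_pow SUm 1 s ({}, snd y) > 0" by simp
  then show ?case by (intro exI[of _ 1] exI[of _ "({}, snd y)"]) simp
next
  case (Suc n)
  from Suc.prems(1) obtain y where y: "0 < Sm s y * mat_pow Sm (Suc n) y t"
    using sum_pos_ex[of "\<lambda>y. Sm s y * mat_pow Sm (Suc n) y t" UNIV]
    by (auto simp: mat_mult_def mat_pow_Suc'[of Sm "Suc n"] simp del: mat_pow.simps)
  then have sy: "Sm s y > 0" and yt: "mat_pow Sm (Suc n) y t > 0"
    using Sm_pow_nonneg[of "Suc n" y t] stoch_nonneg[OF Sm_stoch, of s y]
    by (auto simp: zero_less_mult_iff)
  show ?case
  proof (cases "saturated Sm y")
    case True
    then have "SUm s ({}, snd y) > 0" using SUm_ge[of s y] sy by (simp add: sig_def)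
    then have "mat_pow SUm 1 s ({}, snd y) > 0" by simp
    then show ?thesis by (intro exI[of _ 1] exI[of _ "({}, snd y)"]) simp
  next
    case False
    then have suy: "SUm s y > 0" using SUm_ge[of s y] sy by (simp add: sig_def)
    obtain k u where u: "fst u = {}" "mat_pow SUm k y u > 0" using Suc.IH[OF yt Suc.prems(2)] by blast
    have "SUm s y * mat_pow SUm k y u \<le> mat_pow SUm (Suc k) s u"
      unfolding mat_pow_Suc' by (rule mat_mult_ge) (auto intro: stoch_nonneg SUm_stoch SUm_nonneg)
    moreover have "SUm s y * mat_pow SUm k y u > 0" using suy u by simp
    ultimately show ?thesis using u(1) by (intro exI[of _ "Suc k"] exI[of _ u]) simp
  qed
qed

end


context pnk begin

definition "TT = {t::'a set \<times> 'a set. fst t \<noteq> {}}"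
definition "rho n s = (\<Sum>t\<in>TT. mat_pow SUm n s t)"

lemma rho_nonneg: "0 \<le> rho n s"
  unfolding rho_def by (intro sum_nonneg SUm_nonneg)

lemma rho_le1: "rho n s \<le> 1"
proof -
  have "rho n s \<le> (\<Sum>t\<in>UNIV. mat_pow SUm n s t)"
    unfolding rho_def by (rule sum_mono2) (auto intro: SUm_nonneg)
  then show ?thesis using stoch_sum[OF stoch_pow[OF SUm_stoch]] by simp
qed

lemma rho0: "rho 0 s = (if fst s \<noteq> {} then 1 else 0)"
  by (auto simp: rho_def mat_id_def TT_def)

lemma rho_absorb: "fst t = {} \<Longrightarrow> rho m t = 0"
  by (auto simp: rho_def SUm_pow_absorb TT_def intro!: sum.neutral)

lemma rho_add: "rho (n + m) s = (\<Sum>t\<in>UNIV. mat_pow SUm n s t * rho m t)"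
  unfolding rho_def mat_pow_add mat_mult_def sum_distrib_left
  by (rule sum.swap)

lemma rho_le_rho0: "rho m t \<le> rho 0 t"
  using rho_le1[of m t] rho_absorb[of t m] by (auto simp: rho0)

lemma rho_mono: "rho (n + m) s \<le> rho n s"
proof -
  have "rho (n + m) s \<le> (\<Sum>t\<in>UNIV. mat_pow SUm n s t * rho 0 t)"
    unfolding rho_add by (intro sum_mono mult_left_mono rho_le_rho0 SUm_nonneg)
  also have "\<dots> = rho n s" using rho_add[of n 0 s] by simp
  finally show ?thesis .
qed

lemma rho_lt1: "fst s \<noteq> {} \<Longrightarrow> \<exists>k. rho k s < 1"
proof -
  obtain n t where "mat_pow Sm (Suc n) s t > 0" "saturated Sm t" using exists_sat by blast
  then obtain k u where u: "fst u = {}" "mat_pow SUm k s u > 0" using absorb_pos by blast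
  have "rho k s + mat_pow SUm k s u = (\<Sum>t\<in>insert u TT. mat_pow SUm k s t)"
    using u(1) by (simp add: rho_def TT_def)
  also have "\<dots> \<le> (\<Sum>t\<in>UNIV. mat_pow SUm k s t)"
    by (rule sum_mono2) (auto intro: SUm_nonneg)
  also have "\<dots> = 1" using stoch_sum[OF stoch_pow[OF SUm_stoch]] by simp
  finally show ?thesis using u(2) by (intro exI[of _ k]) linarith
qed

lemma rho_lim: "(\<lambda>n. rho n s) \<longlonglongrightarrow> 0"
proof -
  define k where "k t = (SOME k. rho k t < 1)" for t
  have k: "rho (k t) t < 1" if "t \<in> TT" for t
    using rho_lt1[of t] that unfolding k_def TT_def by (auto intro: someI_ex)
  define K where "K = Max (k ` TT)"
  have KK: "rho K t < 1" if "t \<in> TT" for t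
  proof -
    have "k t \<le> K" unfolding K_def using that by (intro Max_ge) auto
    then have "rho K t \<le> rho (k t) t" using rho_mono[of "k t" "K - k t" t] by simp
    then show ?thesis using k[OF that] by linarith
  qed
  define c where "c = Max (insert 0 ((\<lambda>t. rho K t) ` TT))"
  have c0: "0 \<le> c" unfolding c_def by (intro Max_ge) auto
  have c1: "c < 1" unfolding c_def using KK by (subst Max_less_iff) auto
  have cK: "rho K t \<le> c * rho 0 t" for t
  proof (cases "t \<in> TT")
    case True
    then have "rho K t \<le> c" unfolding c_def by (intro Max_ge) auto
    then show ?thesis using True by (simp add: rho0 TT_def)
  next
    case False
    then show ?thesis using rho_absorb[of t K] by (simp add: rho0 TT_def)
  qed
  have step: "rho (n + K) s' \<le> c * rho n s'" for n s'
  proof -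
    have "rho (n + K) s' \<le> (\<Sum>t\<in>UNIV. mat_pow SUm n s' t * (c * rho 0 t))"
      unfolding rho_add by (intro sum_mono mult_left_mono cK SUm_nonneg)
    also have "\<dots> = c * (\<Sum>t\<in>UNIV. mat_pow SUm n s' t * rho 0 t)"
      by (simp add: sum_distrib_left algebra_simps)
    also have "\<dots> = c * rho n s'" using rho_add[of n 0 s'] by simp
    finally show ?thesis .
  qed
  have pw: "rho (j * K) s \<le> c ^ j" for j
  proof (induction j)
    case 0
    then show ?case using rho_le1 by simp
  next
    case (Suc j)
    have "rho (Suc j * K) s = rho (j * K + K) s" by (simp add: add.commute)
    also have "\<dots> \<le> c * rho (j * K) s" by (rule step)
    also have "\<dots> \<le> c * c ^ j" using Suc c0 by (intro mult_left_mono) auto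
    finally show ?case by simp
  qed
  have "decseq (\<lambda>n. rho n s)"
    by (rule decseq_SucI) (metis Suc_eq_plus1 rho_mono)
  then obtain L where L: "(\<lambda>n. rho n s) \<longlonglongrightarrow> L" "\<forall>i. L \<le> rho i s"
    using decseq_convergent[of "\<lambda>n. rho n s" 0] rho_nonneg by blast
  have "L \<le> c ^ j" for j using L(2) pw[of j] by (meson order_trans)
  moreover have "(\<lambda>j. c ^ j) \<longlonglongrightarrow> 0" using c0 c1 by (intro LIMSEQ_power_zero) simp
  ultimately have "L \<le> 0" by (intro LIMSEQ_le_const[of "\<lambda>j. c ^ j"]) auto
  moreover have "0 \<le> L" using L(1) rho_nonneg by (intro LIMSEQ_le_const[OF L(1)]) auto
  ultimately show ?thesis using L(1) by simp
qed

end


definition mv :: "'a::finite mat \<Rightarrow> ('a \<Rightarrow> real) \<Rightarrow> 'a \<Rightarrow> real" where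
  "mv M v s = (\<Sum>t\<in>UNIV. M s t * v t)"

lemma mv_mult: "mv (mat_mult A B) v = mv A (mv B v)"
  by (auto simp: mv_def mat_mult_def fun_eq_iff sum_distrib_left sum_distrib_right mult.assoc intro: sum.swap)

lemma mv_id[simp]: "mv mat_id v = v"
  by (auto simp: mv_def mat_id_def fun_eq_iff if_distrib[where f="\<lambda>c. c * _"] cong: if_cong)

context pnk begin

definition "Sinf s t = lim (\<lambda>n. mat_pow SUm n s t)"

lemma SU_convergent: "convergent (\<lambda>n. mat_pow SUm n s t)"
proof (cases "fst t = {}")
  case True
  have "incseq (\<lambda>n. mat_pow SUm n s t)"
  proof (rule incseq_SucI)
    fix n
    have "mat_pow SUm n s t * SUm t t \<le> mat_pow SUm (Suc n) s t"
      unfolding mat_pow.simps by (rule mat_mult_ge) (auto intro: SUm_nonneg stoch_nonneg[OF SUm_stoch])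
    moreover have "SUm t t = 1" using True SUm_empty[of "snd t" t] by (cases t) simp
    ultimately show "mat_pow SUm n s t \<le> mat_pow SUm (Suc n) s t" by simp
  qed
  then show ?thesis using incseq_convergent[of _ 1] SUm_pow_le1 by (metis convergent_def)
next
  case False
  have "(\<lambda>n. mat_pow SUm n s t) \<longlonglongrightarrow> 0"
  proof (rule real_tendsto_sandwich[of "\<lambda>n. 0" _ _ "\<lambda>n. rho n s"])
    show "\<forall>\<^sub>F n in sequentially. 0 \<le> mat_pow SUm n s t" by (simp add: SUm_nonneg)
    show "\<forall>\<^sub>F n in sequentially. mat_pow SUm n s t \<le> rho n s"
      unfolding rho_def using False
      by (intro always_eventually allI member_le_sum) (auto simp: TT_def SUm_nonneg)
  qed (auto simp: rho_lim)
  then show ?thesis by (auto simp: convergent_def)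
qed

lemma SU_conv: "(\<lambda>n. mat_pow SUm n s t) \<longlonglongrightarrow> Sinf s t"
  unfolding Sinf_def using SU_convergent convergent_LIMSEQ_iff by blast

lemma Sinf_T: "fst t \<noteq> {} \<Longrightarrow> Sinf s t = 0"
proof -
  assume "fst t \<noteq> {}"
  have "(\<lambda>n. mat_pow SUm n s t) \<longlonglongrightarrow> 0"
  proof (rule real_tendsto_sandwich[of "\<lambda>n. 0" _ _ "\<lambda>n. rho n s"])
    show "\<forall>\<^sub>F n in sequentially. 0 \<le> mat_pow SUm n s t" by (simp add: SUm_nonneg)
    show "\<forall>\<^sub>F n in sequentially. mat_pow SUm n s t \<le> rho n s"
      unfolding rho_def using \<open>fst t \<noteq> {}\<close>
      by (intro always_eventually allI member_le_sum) (auto simp: TT_def SUm_nonneg)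
  qed (auto simp: rho_lim)
  then show ?thesis using SU_conv LIMSEQ_unique by blast
qed

lemma Sinf_absorb: "fst s = {} \<Longrightarrow> Sinf s t = (if s = t then 1 else 0)"
  unfolding Sinf_def by (auto simp: SUm_pow_absorb)

lemma Sinf_eq: "Sinf s t = (\<Sum>u\<in>UNIV. SUm s u * Sinf u t)"
proof -
  have "(\<lambda>n. mat_pow SUm (Suc n) s t) \<longlonglongrightarrow> Sinf s t"
    using SU_conv LIMSEQ_Suc by blast
  moreover have "(\<lambda>n. mat_pow SUm (Suc n) s t) \<longlonglongrightarrow> (\<Sum>u\<in>UNIV. SUm s u * Sinf u t)"
    unfolding mat_pow_Suc' mat_mult_def by (intro tendsto_intros SU_conv)
  ultimately show ?thesis using LIMSEQ_unique by blast
qed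

definition "vv b' m = mv (mat_pow Sm m) (\<lambda>t. if snd t = b' then 1 else 0)"

lemma vv_sat:
  assumes "saturated Sm y"
  shows "vv b' m y = (if snd y = b' then 1 else 0)"
proof -
  have "vv b' m y = (\<Sum>t\<in>UNIV. mat_pow Sm m y t * (if snd y = b' then 1 else 0))"
    unfolding vv_def mv_def
  proof (rule sum.cong)
    fix t
    show "mat_pow Sm m y t * (if snd t = b' then 1 else 0) = mat_pow Sm m y t * (if snd y = b' then 1 else 0)"
    proof (cases "mat_pow Sm m y t = 0")
      case False
      then have "mat_pow Sm m y t > 0" using Sm_pow_nonneg[of m y t] by linarith
      then have "snd t = snd y" using assms unfolding saturated_def by blast
      then show ?thesis by simp
    qed simp
  qed simp
  also have "\<dots> = (if snd y = b' then 1 else 0)"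
    using stoch_sum[OF Sm_pow_stoch, of m y] by (simp add: sum_distrib_right[symmetric])
  finally show ?thesis .
qed

lemma U_vv: "mv (U_mat Sm) (vv b' m) = vv b' m"
proof
  fix y
  have "mv (U_mat Sm) (vv b' m) y = vv b' m (sig y)"
    by (simp add: mv_def U_sig if_distrib[where f="\<lambda>c. c * _"] cong: if_cong)
  also have "\<dots> = vv b' m y"
    using vv_sat[OF sat_empty, of b' m "snd y"] vv_sat[of y b' m] by (simp add: sig_def)
  finally show "mv (U_mat Sm) (vv b' m) y = vv b' m y" .
qed

lemma SU_vv: "mv SUm (vv b' m) = vv b' (Suc m)"
  unfolding SUm_def mv_mult U_vv by (simp add: vv_def mv_mult[symmetric] mat_pow_Suc' del: mat_pow.simps)

lemma SUpow_vv: "mv (mat_pow SUm n) (vv b' m) = vv b' (n + m)"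
proof (induction n arbitrary: m)
  case 0
  then show ?case by simp
next
  case (Suc n)
  then show ?case by (simp add: mv_mult SU_vv)
qed

lemma conj2: "(\<lambda>n. \<Sum>a'\<in>UNIV. mat_pow Sm n (a, b) (a', b')) \<longlonglongrightarrow> Sinf (a, b) ({}, b')"
proof -
  have eq: "(\<Sum>a'\<in>UNIV. mat_pow Sm n (a, b) (a', b')) = (\<Sum>t\<in>UNIV. mat_pow SUm n (a, b) t * (if snd t = b' then 1 else 0))" for n
  proof -
    have "(\<Sum>a'\<in>UNIV. mat_pow Sm n (a, b) (a', b')) = vv b' n (a, b)"
      unfolding vv_def mv_def sum_UNIV_pair
      by (simp add: if_distrib[where f="\<lambda>c. _ * c"] cong: if_cong)
    also have "\<dots> = mv (mat_pow SUm n) (vv b' 0) (a, b)" using SUpow_vv[of n b' 0] by simp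
    finally show ?thesis by (simp add: vv_def mv_def)
  qed
  have "(\<lambda>n. \<Sum>t\<in>UNIV. mat_pow SUm n (a, b) t * (if snd t = b' then 1 else 0))
     \<longlonglongrightarrow> (\<Sum>t\<in>UNIV. Sinf (a, b) t * (if snd t = b' then 1 else 0))"
    by (intro tendsto_intros SU_conv)
  also have "(\<Sum>t\<in>UNIV. Sinf (a, b) t * (if snd t = b' then 1 else 0)) = (\<Sum>t\<in>UNIV. if t = ({}, b') then Sinf (a, b) t else 0)"
  proof (rule sum.cong)
    fix t :: "'a set \<times> 'a set"
    show "Sinf (a, b) t * (if snd t = b' then 1 else 0) = (if t = ({}, b') then Sinf (a, b) t else 0)"
      using Sinf_T[of t "(a, b)"] by (cases t) auto
  qed simp
  also have "\<dots> = Sinf (a, b) ({}, b')" by simp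
  finally show ?thesis unfolding eq .
qed

end


context pnk begin

definition "Qm s u = (if fst s \<noteq> {} \<and> fst u \<noteq> {} then SUm s u else 0)"

definition Mv :: "real^('a set \<times> 'a set)^('a set \<times> 'a set)" where
  "Mv = (\<chi> s u. mat_id s u - Qm s u)"

lemma sum_TT:
  fixes h :: "'a set \<times> 'a set \<Rightarrow> real"
  assumes "\<And>u. fst u = {} \<Longrightarrow> h u = 0" shows "sum h UNIV = sum h TT"
proof (rule sum.mono_neutral_right)
  show "\<forall>i\<in>UNIV - TT. h i = 0" using assms by (simp add: TT_def)
qed auto

lemma mv_id_sum: "(\<Sum>u\<in>UNIV. mat_id (s::'a set \<times> 'a set) u * f u) = f s"
  by (simp add: mat_id_def if_distrib[where f="\<lambda>c. c * _"] sum.delta' cong: if_cong)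

lemma Mv_mult: "(Mv *v x) $ s = x $ s - (\<Sum>u\<in>UNIV. Qm s u * x $ u)"
  by (simp add: Mv_def matrix_vector_mult_def left_diff_distrib sum_subtractf mv_id_sum)

lemma Mv_kernel:
  assumes "Mv *v x = 0"
  shows "x = 0"
proof -
  define f where "f s = x $ s" for s
  have f0: "f s = 0" if "fst s = {}" for s
    using arg_cong[OF assms, of "\<lambda>v. v $ s"] that by (simp add: Mv_mult Qm_def f_def)
  have fix1: "mv SUm f s = f s" for s
  proof (cases "fst s = {}")
    case True
    then show ?thesis using SUm_empty[of "snd s"] f0[OF True]
      by (cases s) (simp add: mv_def if_distrib[where f="\<lambda>c. c * _"] cong: if_cong)
  next
    case False
    have "f s = (\<Sum>u\<in>UNIV. Qm s u * x $ u)"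
      using arg_cong[OF assms, of "\<lambda>v. v $ s"] by (simp add: Mv_mult f_def)
    also have "\<dots> = mv SUm f s"
      unfolding mv_def f_def by (rule sum.cong) (use False f0 in \<open>auto simp: Qm_def f_def\<close>)
    finally show ?thesis by simp
  qed
  then have fixf: "mv SUm f = f" by auto
  then have fixn: "mv (mat_pow SUm n) f = f" for n
    by (induction n) (simp_all add: mv_mult)
  define B where "B = (\<Sum>u\<in>UNIV. \<bar>f u\<bar>)"
  have bnd: "\<bar>f s\<bar> \<le> B * rho n s" for n s
  proof -
    have "f s = mv (mat_pow SUm n) f s" using fixn[of n] by simp
    then have "\<bar>f s\<bar> = \<bar>\<Sum>u\<in>UNIV. mat_pow SUm n s u * f u\<bar>"
      by (simp only: mv_def)
    also have "\<dots> \<le> (\<Sum>u\<in>UNIV. \<bar>mat_pow SUm n s u * f u\<bar>)" by (rule sum_abs)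
    also have "\<dots> = (\<Sum>u\<in>TT. \<bar>mat_pow SUm n s u * f u\<bar>)" by (rule sum_TT) (simp add: f0)
    also have "\<dots> \<le> (\<Sum>u\<in>TT. mat_pow SUm n s u * B)"
    proof (rule sum_mono)
      fix u
      have "\<bar>f u\<bar> \<le> B" unfolding B_def by (rule member_le_sum) auto
      then show "\<bar>mat_pow SUm n s u * f u\<bar> \<le> mat_pow SUm n s u * B"
        using SUm_nonneg[of n s u] by (simp add: abs_mult mult_left_mono)
    qed
    also have "\<dots> = B * rho n s" by (simp add: rho_def sum_distrib_left mult.commute)
    finally show ?thesis .
  qed
  have "f s = 0" for s
  proof -
    have "(\<lambda>n. B * rho n s) \<longlonglongrightarrow> B * 0" by (intro tendsto_intros rho_lim)
    then have "\<bar>f s\<bar> \<le> 0" using bnd by (intro LIMSEQ_le_const[of "\<lambda>n. B * rho n s"]) auto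
    then show ?thesis by simp
  qed
  then show ?thesis by (simp add: vec_eq_iff f_def)
qed

lemma Mv_inj: "inj ((*v) Mv)"
proof (rule injI)
  fix x y assume "Mv *v x = Mv *v y"
  then have "Mv *v (x - y) = 0" by (simp add: matrix_vector_mult_diff_distrib)
  then show "x = y" using Mv_kernel by fastforce
qed

lemma Mv_inverse: "\<exists>Bm. Bm ** Mv = mat 1 \<and> Mv ** Bm = mat 1"
  using Mv_inj matrix_left_invertible_injective matrix_left_right_inverse by blast

lemma Mv_det: "det Mv \<noteq> 0"
  using Mv_inverse invertible_det_nz invertible_left_inverse by blast

lemma Mv_Sinf:
  assumes "fst t = {}"
  shows "Mv *v (\<chi> s. Sinf s t) = (\<chi> s. if fst s \<noteq> {} then SUm s t else mat_id s t)"
proof -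
  have "(Mv *v (\<chi> s. Sinf s t)) $ s = (if fst s \<noteq> {} then SUm s t else mat_id s t)" for s
  proof (cases "fst s = {}")
    case True
    then show ?thesis by (simp add: Mv_mult Qm_def Sinf_absorb mat_id_def)
  next
    case False
    have "Sinf s t = (\<Sum>u\<in>UNIV. Qm s u * Sinf u t + (if fst u = {} then SUm s u * Sinf u t else 0))"
      unfolding Sinf_eq[of s t] by (rule sum.cong) (auto simp: Qm_def False)
    also have "\<dots> = (\<Sum>u\<in>UNIV. Qm s u * Sinf u t) + (\<Sum>u\<in>UNIV. if fst u = {} then SUm s u * Sinf u t else 0)"
      by (simp add: sum.distrib)
    also have "(\<Sum>u\<in>UNIV. if fst u = {} then SUm s u * Sinf u t else 0) = (\<Sum>u\<in>UNIV. if u = t then SUm s u else 0)"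
      by (rule sum.cong) (auto simp: Sinf_absorb assms)
    also have "\<dots> = SUm s t" by simp
    finally show ?thesis using False by (simp add: Mv_mult)
  qed
  then show ?thesis by (simp add: vec_eq_iff)
qed

end


context pnk begin

lemma TT_eq: "{u. \<not> absorbing_st u} = TT"
  by (simp add: TT_def absorbing_st_def)

lemma SUm_Rats:
  assumes Prat: "\<And>a b. P a b \<in> \<rat>"
  shows "SUm s t \<in> \<rat>"
  unfolding SUm_def mat_mult_def
  by (intro Rats_sum Rats_mult) (auto simp: Sm_def small_step_def Prat U_mat_def)

lemma Sinf_Rats:
  assumes Prat: "\<And>a b. P a b \<in> \<rat>"
  shows "Sinf s t \<in> \<rat>"
proof (cases "fst t = {}")
  case False
  then show ?thesis by (simp add: Sinf_T)
next
  case True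
  define bv where "bv = (\<chi> s. if fst s \<noteq> {} then SUm s t else mat_id s t)"
  have eq: "Mv *v (\<chi> s. Sinf s t) = bv" unfolding bv_def by (rule Mv_Sinf[OF True])
  have MR: "Mv $ i $ j \<in> \<rat>" for i j
    by (auto simp: Mv_def Qm_def mat_id_def SUm_Rats[OF Prat])
  have bR: "bv $ i \<in> \<rat>" for i
    by (auto simp: bv_def mat_id_def SUm_Rats[OF Prat])
  have "(\<chi> s. Sinf s t) = (\<chi> k. det (\<chi> i j. if j = k then bv $ i else Mv $ i $ j) / det Mv)"
    using iffD1[OF cramer[OF Mv_det] eq] .
  from arg_cong[OF this, of "\<lambda>v. v $ s"]
  have "Sinf s t = det (\<chi> i j. if j = s then bv $ i else Mv $ i $ j) / det Mv"
    by (simp only: vec_lambda_beta)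
  also have "\<dots> \<in> \<rat>"
    by (intro Rats_divide det_Rats) (use MR bR in auto)
  finally show ?thesis .
qed

lemma core:
  assumes Prat: "\<And>a b. P a b \<in> \<rat>"
  shows "\<exists>Sinf.
     (\<forall>s t. (\<lambda>n. mat_pow SUm n s t) \<longlonglongrightarrow> Sinf s t)
   \<and> (\<forall>a b b'. (\<lambda>n. \<Sum>a'\<in>UNIV. mat_pow Sm n (a, b) (a', b')) \<longlonglongrightarrow> Sinf (a, b) ({}, b'))
   \<and> (\<forall>s t. absorbing_st s \<longrightarrow> Sinf s t = (if s = t then 1 else 0))
   \<and> (\<forall>s t. \<not> absorbing_st t \<longrightarrow> Sinf s t = 0)
   \<and> (\<exists>N. (\<forall>s t. \<not> absorbing_st s \<longrightarrow> \<not> absorbing_st t \<longrightarrow>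
              (\<Sum>u\<in>{u. \<not> absorbing_st u}. N s u * (mat_id u t - SUm u t)) = mat_id s t
            \<and> (\<Sum>u\<in>{u. \<not> absorbing_st u}. (mat_id s u - SUm s u) * N u t) = mat_id s t)
          \<and> (\<forall>s t. \<not> absorbing_st s \<longrightarrow> absorbing_st t \<longrightarrow>
              Sinf s t = (\<Sum>u\<in>{u. \<not> absorbing_st u}. N s u * SUm u t)))
   \<and> (\<forall>s t. Sinf s t \<in> \<rat>)"
proof -
  obtain Bm where Bm: "Bm ** Mv = mat 1" "Mv ** Bm = mat 1" using Mv_inverse by blast
  define N where "N s u = Bm $ s $ u" for s u
  have BM: "(\<Sum>u\<in>UNIV. N s u * (mat_id u t - Qm u t)) = mat_id s t" for s t
    using arg_cong[OF Bm(1), of "\<lambda>A. A $ s $ t"]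
    by (simp add: matrix_matrix_mult_def mat_def Mv_def N_def mat_id_def)
  have MB: "(\<Sum>u\<in>UNIV. (mat_id s u - Qm s u) * N u t) = mat_id s t" for s t
    using arg_cong[OF Bm(2), of "\<lambda>A. A $ s $ t"]
    by (simp add: matrix_matrix_mult_def mat_def Mv_def N_def mat_id_def)
  have Npart: "\<exists>N. (\<forall>s t. \<not> absorbing_st s \<longrightarrow> \<not> absorbing_st t \<longrightarrow>
              (\<Sum>u\<in>{u. \<not> absorbing_st u}. N s u * (mat_id u t - SUm u t)) = mat_id s t
            \<and> (\<Sum>u\<in>{u. \<not> absorbing_st u}. (mat_id s u - SUm s u) * N u t) = mat_id s t)
          \<and> (\<forall>s t. \<not> absorbing_st s \<longrightarrow> absorbing_st t \<longrightarrow>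
              Sinf s t = (\<Sum>u\<in>{u. \<not> absorbing_st u}. N s u * SUm u t))"
  proof (intro exI[of _ N] conjI allI impI)
    fix s t :: "'a set \<times> 'a set"
    assume s: "\<not> absorbing_st s" and t: "\<not> absorbing_st t"
    have "(\<Sum>u\<in>UNIV. N s u * (mat_id u t - Qm u t)) = (\<Sum>u\<in>TT. N s u * (mat_id u t - Qm u t))"
      by (rule sum_TT) (use t in \<open>auto simp: absorbing_st_def Qm_def mat_id_def\<close>)
    also have "\<dots> = (\<Sum>u\<in>TT. N s u * (mat_id u t - SUm u t))"
      by (rule sum.cong) (use t in \<open>auto simp: absorbing_st_def Qm_def TT_def\<close>)
    finally show "(\<Sum>u\<in>{u. \<not> absorbing_st u}. N s u * (mat_id u t - SUm u t)) = mat_id s t"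
      using BM[of s t] by (simp add: TT_eq)
    have "(\<Sum>u\<in>UNIV. (mat_id s u - Qm s u) * N u t) = (\<Sum>u\<in>TT. (mat_id s u - Qm s u) * N u t)"
      by (rule sum_TT) (use s in \<open>auto simp: absorbing_st_def Qm_def mat_id_def\<close>)
    also have "\<dots> = (\<Sum>u\<in>TT. (mat_id s u - SUm s u) * N u t)"
      by (rule sum.cong) (use s in \<open>auto simp: absorbing_st_def Qm_def TT_def\<close>)
    finally show "(\<Sum>u\<in>{u. \<not> absorbing_st u}. (mat_id s u - SUm s u) * N u t) = mat_id s t"
      using MB[of s t] by (simp add: TT_eq)
  next
    fix s t :: "'a set \<times> 'a set"
    assume s: "\<not> absorbing_st s" and t: "absorbing_st t"
    have Nst: "N s t = 0"
    proof -
      have "(\<Sum>u\<in>UNIV. N s u * (mat_id u t - Qm u t)) = (\<Sum>u\<in>UNIV. N s u * mat_id u t)"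
        by (rule sum.cong) (use t in \<open>auto simp: absorbing_st_def Qm_def\<close>)
      also have "\<dots> = N s t" by (simp add: mat_id_def if_distrib[where f="\<lambda>c. _ * c"] cong: if_cong)
      finally show ?thesis using BM[of s t] s t by (auto simp: mat_id_def absorbing_st_def)
    qed
    define bv where "bv = (\<chi> s. if fst s \<noteq> {} then SUm s t else mat_id s t)"
    have eq: "Mv *v (\<chi> s. Sinf s t) = bv" unfolding bv_def
      by (rule Mv_Sinf) (use t in \<open>simp add: absorbing_st_def\<close>)
    have "(\<chi> s. Sinf s t) = Bm *v bv"
      using arg_cong[OF eq, of "\<lambda>v. Bm *v v"] by (simp add: matrix_vector_mul_assoc Bm(1))
    then have "(\<chi> s. Sinf s t) $ s = (Bm *v bv) $ s" by simp
    then have "Sinf s t = (\<Sum>u\<in>UNIV. N s u * bv $ u)"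
      by (simp add: matrix_vector_mult_def N_def)
    also have "\<dots> = (\<Sum>u\<in>UNIV. (if fst u \<noteq> {} then N s u * SUm u t else 0) + (if fst u = {} then N s u * mat_id u t else 0))"
      by (rule sum.cong) (auto simp: bv_def)
    also have "\<dots> = (\<Sum>u\<in>UNIV. if fst u \<noteq> {} then N s u * SUm u t else 0) + (\<Sum>u\<in>UNIV. if fst u = {} then N s u * mat_id u t else 0)"
      by (rule sum.distrib)
    also have "(\<Sum>u\<in>UNIV. if fst u = {} then N s u * mat_id u t else 0) = (\<Sum>u\<in>UNIV. if u = t then N s u else 0)"
      by (rule sum.cong) (use t in \<open>auto simp: absorbing_st_def mat_id_def\<close>)
    also have "\<dots> = 0" using Nst by simp
    also have "(\<Sum>u\<in>UNIV. if fst u \<noteq> {} then N s u * SUm u t else 0) = (\<Sum>u\<in>TT. N s u * SUm u t)"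
      by (simp add: TT_def sum.If_cases)
    finally show "Sinf s t = (\<Sum>u\<in>{u. \<not> absorbing_st u}. N s u * SUm u t)" by (simp add: TT_eq)
  qed
  have c1: "\<forall>s t. (\<lambda>n. mat_pow SUm n s t) \<longlonglongrightarrow> Sinf s t" using SU_conv by blast
  have c2: "\<forall>a b b'. (\<lambda>n. \<Sum>a'\<in>UNIV. mat_pow Sm n (a, b) (a', b')) \<longlonglongrightarrow> Sinf (a, b) ({}, b')" using conj2 by blast
  have c3: "\<forall>s t. absorbing_st s \<longrightarrow> Sinf s t = (if s = t then 1 else 0)"
    by (intro allI impI Sinf_absorb) (simp add: absorbing_st_def)
  have c4: "\<forall>s t. \<not> absorbing_st t \<longrightarrow> Sinf s t = 0"
    by (intro allI impI Sinf_T) (simp add: absorbing_st_def)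
  have c6: "\<forall>s t. Sinf s t \<in> \<rat>" using Sinf_Rats[OF Prat] by blast
  show ?thesis by (rule exI[of _ Sinf]) (rule conjI[OF c1 conjI[OF c2 conjI[OF c3 conjI[OF c4 conjI[OF Npart c6]]]]])
qed

end


lemma pick_lemma:
  fixes F :: "'a::finite set \<Rightarrow> real"
  shows "(\<Sum>c\<in>UNIV. \<Sum>e\<in>UNIV. if c \<union> e = d then mat_id a c * F e else 0) = (\<Sum>e\<in>UNIV. if a \<union> e = d then F e else 0)"
proof -
  have "(\<Sum>c\<in>UNIV. \<Sum>e\<in>UNIV. if c \<union> e = d then mat_id a c * F e else 0) = (\<Sum>c\<in>UNIV. if a = c then (\<Sum>e\<in>UNIV. if c \<union> e = d then F e else 0) else 0)"
  proof (rule sum.cong[OF refl])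
    fix c
    show "(\<Sum>e\<in>UNIV. if c \<union> e = d then mat_id a c * F e else 0) = (if a = c then (\<Sum>e\<in>UNIV. if c \<union> e = d then F e else 0) else 0)"
      by (cases "a = c") (simp_all add: mat_id_def cong: if_cong)
  qed
  then show ?thesis by simp
qed

context pnk begin

lemma Sm_apply: "Sm (a, c) (a', b) = (if b = c \<union> a then P a a' else 0)"
  by (simp add: Sm_def small_step_def)

lemma star_rel:
  "(\<Sum>a'\<in>UNIV. mat_pow Sm (Suc n) (a, c) (a', b)) = (\<Sum>d\<in>UNIV. if c \<union> d = b then star_approx P n a d else 0)"
proof (induction n arbitrary: a c b)
  case 0
  have "(\<Sum>a'\<in>UNIV. mat_pow Sm (Suc 0) (a, c) (a', b)) = (\<Sum>a'\<in>UNIV. if b = c \<union> a then P a a' else 0)"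
    by (simp add: Sm_apply)
  also have "\<dots> = (if c \<union> a = b then 1 else 0)" by (cases "b = c \<union> a") (auto simp: P_sum)
  also have "\<dots> = (\<Sum>d\<in>UNIV. if d = a then (if c \<union> a = b then 1 else 0) else 0)" by simp
  also have "\<dots> = (\<Sum>d\<in>UNIV. if c \<union> d = b then star_approx P 0 a d else 0)"
    by (rule sum.cong) (auto simp: mat_id_def)
  finally show ?case .
next
  case (Suc n)
  define X where "X = star_approx P n"
  have "(\<Sum>a'\<in>UNIV. mat_pow Sm (Suc (Suc n)) (a, c) (a', b))
      = (\<Sum>a'\<in>UNIV. \<Sum>y\<in>UNIV. Sm (a, c) y * mat_pow Sm (Suc n) y (a', b))"
    by (simp only: mat_pow_Suc'[of Sm "Suc n"] mat_mult_def)
  also have "\<dots> = (\<Sum>y\<in>UNIV. Sm (a, c) y * (\<Sum>a'\<in>UNIV. mat_pow Sm (Suc n) y (a', b)))"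
    by (simp only: sum_distrib_left, rule sum.swap)
  also have "\<dots> = (\<Sum>y1\<in>UNIV. \<Sum>y2\<in>UNIV. (if y2 = c \<union> a then P a y1 else 0) * (\<Sum>a'\<in>UNIV. mat_pow Sm (Suc n) (y1, y2) (a', b)))"
    by (simp add: sum_UNIV_pair Sm_apply)
  also have "\<dots> = (\<Sum>y1\<in>UNIV. P a y1 * (\<Sum>a'\<in>UNIV. mat_pow Sm (Suc n) (y1, c \<union> a) (a', b)))"
    by (simp add: if_distrib[where f="\<lambda>x. x * _"] cong: if_cong)
  also have "\<dots> = (\<Sum>y1\<in>UNIV. P a y1 * (\<Sum>e\<in>UNIV. if c \<union> a \<union> e = b then X y1 e else 0))"
    unfolding X_def by (rule sum.cong[OF refl]) (simp add: Suc.IH del: mat_pow.simps)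
  finally have L: "(\<Sum>a'\<in>UNIV. mat_pow Sm (Suc (Suc n)) (a, c) (a', b)) = \<dots>" .
  have X1: "star_approx P (Suc n) a d = (\<Sum>e\<in>UNIV. if a \<union> e = d then (\<Sum>y\<in>UNIV. P a y * X y e) else 0)" for d
  proof -
    have "star_approx P (Suc n) a d = (\<Sum>c'\<in>UNIV. \<Sum>e\<in>UNIV. if c' \<union> e = d then mat_id a c' * (\<Sum>y\<in>UNIV. P a y * X y e) else 0)"
      unfolding X_def by (simp only: star_approx.simps par_mat_def mat_mult_def)
    also have "\<dots> = (\<Sum>e\<in>UNIV. if a \<union> e = d then (\<Sum>y\<in>UNIV. P a y * X y e) else 0)"
      by (rule pick_lemma)
    finally show ?thesis .
  qed
  have "(\<Sum>d\<in>UNIV. if c \<union> d = b then star_approx P (Suc n) a d else 0)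
      = (\<Sum>d\<in>UNIV. \<Sum>e\<in>UNIV. if c \<union> d = b \<and> a \<union> e = d then (\<Sum>y\<in>UNIV. P a y * X y e) else 0)"
    unfolding X1 by (rule sum.cong) (auto intro: sum.cong)
  also have "\<dots> = (\<Sum>e\<in>UNIV. \<Sum>d\<in>UNIV. if d = a \<union> e then (if c \<union> d = b then (\<Sum>y\<in>UNIV. P a y * X y e) else 0) else 0)"
    by (subst sum.swap) (rule sum.cong, simp, rule sum.cong, auto)
  also have "\<dots> = (\<Sum>e\<in>UNIV. if c \<union> a \<union> e = b then (\<Sum>y\<in>UNIV. P a y * X y e) else 0)"
    by (simp add: Un_assoc)
  also have "\<dots> = (\<Sum>e\<in>UNIV. \<Sum>y\<in>UNIV. P a y * (if c \<union> a \<union> e = b then X y e else 0))"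
    by (rule sum.cong) (auto simp: sum_distrib_left)
  also have "\<dots> = (\<Sum>y\<in>UNIV. P a y * (\<Sum>e\<in>UNIV. if c \<union> a \<union> e = b then X y e else 0))"
    by (subst sum.swap) (simp add: sum_distrib_left)
  finally show ?case using L by simp
qed

lemma star_approx_eq: "star_approx P n a b = (\<Sum>a'\<in>UNIV. mat_pow Sm (Suc n) (a, {}) (a', b))"
  using star_rel[of n a "{}" b] by (simp del: mat_pow.simps)

lemma star_lim: "(\<lambda>n. star_approx P n a b) \<longlonglongrightarrow> Sinf (a, {}) ({}, b)"
  unfolding star_approx_eq using conj2 LIMSEQ_Suc by blast

end

lemma par_mat_empty_row:
  fixes P Q :: "'a::finite set mat"
  assumes "\<And>a. P {} a = (if a = {} then 1 else 0)" "\<And>a. Q {} a = (if a = {} then 1 else 0)"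
  shows "par_mat P Q {} {} = 1"
proof -
  have "par_mat P Q {} {} = (\<Sum>c::'a set\<in>UNIV. \<Sum>d::'a set\<in>UNIV. if c = {} \<and> d = {} then (1::real) else 0)"
    by (simp add: par_mat_def assms if_distrib[where f="\<lambda>x. x * _"] if_distrib[where f="\<lambda>x. _ * x"] cong: if_cong)
  also have "\<dots> = (\<Sum>c::'a set\<in>UNIV. if c = {} then (\<Sum>d::'a set\<in>UNIV. if d = {} then (1::real) else 0) else 0)"
    by (rule sum.cong) auto
  finally show ?thesis by simp
qed

lemma par_mat_sum:
  fixes P Q :: "'a::finite set mat"
  assumes "\<And>a. (\<Sum>b\<in>UNIV. P a b) = 1" "\<And>a. (\<Sum>b\<in>UNIV. Q a b) = 1"
  shows "(\<Sum>b\<in>UNIV. par_mat P Q a b) = (1::real)"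
proof -
  have "(\<Sum>b\<in>UNIV. par_mat P Q a b) = (\<Sum>c\<in>UNIV. \<Sum>d\<in>UNIV. \<Sum>b\<in>UNIV. if c \<union> d = b then P a c * Q a d else 0)"
    unfolding par_mat_def by (subst sum.swap) (rule sum.cong, simp, subst sum.swap, simp)
  also have "\<dots> = (\<Sum>c\<in>UNIV. \<Sum>d\<in>UNIV. P a c * Q a d)" by simp
  also have "\<dots> = (\<Sum>c\<in>UNIV. P a c) * (\<Sum>d\<in>UNIV. Q a d)" by (simp add: sum_product)
  finally show ?thesis using assms by simp
qed



lemma bsem_props:
  fixes p :: "('f::finite, 'v::finite) prog"
  shows "wf_prog p \<Longrightarrow> (\<forall>a b. 0 \<le> bsem p a b) \<and> (\<forall>a. (\<Sum>b\<in>UNIV. bsem p a b) = 1) \<and> bsem p {} {} = 1 \<and> (\<forall>a b. bsem p a b \<in> \<rat>)"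
proof (induction p)
  case (Pred t)
  then show ?case by auto
next
  case (Assign f n)
  then show ?case by auto
next
  case (Par p q)
  then have Hp: "pnk (bsem p)" and Hq: "pnk (bsem q)"
    and Rp: "\<forall>a b. bsem p a b \<in> \<rat>" and Rq: "\<forall>a b. bsem q a b \<in> \<rat>"
    by (auto simp: pnk_def)
  have "0 \<le> bsem (Par p q) a b" for a b
    using Hp Hq by (auto simp: par_mat_def pnk_def intro!: sum_nonneg)
  moreover have "(\<Sum>b\<in>UNIV. bsem (Par p q) a b) = 1" for a
    using par_mat_sum[of "bsem p" "bsem q" a] Hp Hq by (simp add: pnk_def)
  moreover have "bsem (Par p q) {} {} = 1"
    using par_mat_empty_row[of "bsem p" "bsem q", OF pnk.P_empty_row[OF Hp] pnk.P_empty_row[OF Hq]] by simp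
  moreover have "bsem (Par p q) a b \<in> \<rat>" for a b
    using Rp Rq by (auto simp: par_mat_def intro!: Rats_sum Rats_mult)
  ultimately show ?case by blast
next
  case (Seq p q)
  then have Hp: "pnk (bsem p)" and Hq: "pnk (bsem q)"
    and Rp: "\<forall>a b. bsem p a b \<in> \<rat>" and Rq: "\<forall>a b. bsem q a b \<in> \<rat>"
    by (auto simp: pnk_def)
  have st: "stoch (mat_mult (bsem p) (bsem q))"
    using Hp Hq by (intro stoch_mult) (auto simp: stoch_def pnk_def)
  have "0 \<le> bsem (Seq p q) a b" for a b
    using stoch_nonneg[OF st] by simp
  moreover have "(\<Sum>b\<in>UNIV. bsem (Seq p q) a b) = 1" for a
    using stoch_sum[OF st] by simp
  moreover have "bsem (Seq p q) {} {} = 1"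
    using pnk.P_empty_row[OF Hp] pnk.P_empty[OF Hq]
    by (simp add: mat_mult_def if_distrib[where f="\<lambda>x. x * _"] cong: if_cong)
  moreover have "bsem (Seq p q) a b \<in> \<rat>" for a b
    using Rp Rq by (auto simp: mat_mult_def intro!: Rats_sum Rats_mult)
  ultimately show ?case by blast
next
  case (Choice p r q)
  then have Hp: "pnk (bsem p)" and Hq: "pnk (bsem q)"
    and Rp: "\<forall>a b. bsem p a b \<in> \<rat>" and Rq: "\<forall>a b. bsem q a b \<in> \<rat>"
    and r: "0 \<le> real_of_rat r" "real_of_rat r \<le> 1"
    by (auto simp: pnk_def)
  have "0 \<le> bsem (Choice p r q) a b" for a b
    using Hp Hq r by (auto simp: pnk_def intro!: add_nonneg_nonneg mult_nonneg_nonneg)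
  moreover have "(\<Sum>b\<in>UNIV. bsem (Choice p r q) a b) = 1" for a
    using Hp Hq by (simp add: sum.distrib sum_distrib_left[symmetric] pnk_def)
  moreover have "bsem (Choice p r q) {} {} = 1"
    using Hp Hq by (simp add: pnk_def)
  moreover have "bsem (Choice p r q) a b \<in> \<rat>" for a b
    using Rp Rq by (auto intro!: Rats_add Rats_mult Rats_diff)
  ultimately show ?case by blast
next
  case (Star p)
  then have Hp: "pnk (bsem p)" and Rp: "\<And>a b. bsem p a b \<in> \<rat>"
    by (auto simp: pnk_def)
  interpret pnk "bsem p" by (rule Hp)
  have eq: "bsem (Star p) a b = Sinf (a, {}) ({}, b)" for a b
    using star_lim[of a b] by (simp add: limI)
  have "0 \<le> bsem (Star p) a b" for a b
    unfolding eq using SU_conv SUm_nonneg by (intro LIMSEQ_le_const[OF SU_conv]) auto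
  moreover have "(\<Sum>b\<in>UNIV. bsem (Star p) a b) = 1" for a
  proof -
    have one: "(\<Sum>b\<in>UNIV. star_approx (bsem p) n a b) = 1" for n
    proof -
      have "(\<Sum>b\<in>UNIV. star_approx (bsem p) n a b) = (\<Sum>b\<in>UNIV. \<Sum>a'\<in>UNIV. mat_pow Sm (Suc n) (a, {}) (a', b))"
        by (simp only: star_approx_eq)
      also have "\<dots> = (\<Sum>t\<in>UNIV. mat_pow Sm (Suc n) (a, {}) t)"
        by (simp only: sum_UNIV_pair) (rule sum.swap)
      also have "\<dots> = 1" by (rule stoch_sum[OF Sm_pow_stoch])
      finally show ?thesis .
    qed
    have "(\<lambda>n. \<Sum>b\<in>UNIV. star_approx (bsem p) n a b) \<longlonglongrightarrow> (\<Sum>b\<in>UNIV. Sinf (a, {}) ({}, b))"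
      by (intro tendsto_sum star_lim)
    then have "(\<Sum>b\<in>UNIV. Sinf (a, {}) ({}, b)) = 1" unfolding one by (simp add: LIMSEQ_const_iff)
    then show ?thesis by (simp only: eq)
  qed
  moreover have "bsem (Star p) {} {} = 1" unfolding eq by (simp add: Sinf_absorb)
  moreover have "bsem (Star p) a b \<in> \<rat>" for a b
    unfolding eq by (rule Sinf_Rats[OF Rp])
  ultimately show ?case by blast
qed

theorem theorem4p7:
  fixes p :: "('f::finite, 'v::finite) prog"
  assumes "wf_prog p"
  defines "S \<equiv> small_step (bsem p)"
  defines "SU \<equiv> mat_mult S (U_mat S)"
  shows "\<exists>Sinf.
     (\<forall>s t. (\<lambda>n. mat_pow SU n s t) \<longlonglongrightarrow> Sinf s t)
   \<and> (\<forall>a b b'. (\<lambda>n. \<Sum>a'\<in>UNIV. mat_pow S n (a, b) (a', b')) \<longlonglongrightarrow> Sinf (a, b) ({}, b'))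
   \<and> (\<forall>s t. absorbing_st s \<longrightarrow> Sinf s t = (if s = t then 1 else 0))
   \<and> (\<forall>s t. \<not> absorbing_st t \<longrightarrow> Sinf s t = 0)
   \<and> (\<exists>N. (\<forall>s t. \<not> absorbing_st s \<longrightarrow> \<not> absorbing_st t \<longrightarrow>
              (\<Sum>u\<in>{u. \<not> absorbing_st u}. N s u * (mat_id u t - SU u t)) = mat_id s t
            \<and> (\<Sum>u\<in>{u. \<not> absorbing_st u}. (mat_id s u - SU s u) * N u t) = mat_id s t)
          \<and> (\<forall>s t. \<not> absorbing_st s \<longrightarrow> absorbing_st t \<longrightarrow>
              Sinf s t = (\<Sum>u\<in>{u. \<not> absorbing_st u}. N s u * SU u t)))
   \<and> (\<forall>s t. Sinf s t \<in> \<rat>)"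
proof -
  have H: "pnk (bsem p)" and R: "\<And>a b. bsem p a b \<in> \<rat>"
    using bsem_props[OF assms(1)] by (auto simp: pnk_def)
  have "S = pnk.Sm (bsem p)" "SU = pnk.SUm (bsem p)"
    unfolding S_def SU_def pnk.Sm_def[OF H] pnk.SUm_def[OF H] by simp_all
  then show ?thesis using pnk.core[OF H R] by simp
qed


end
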